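(* Let $p$ be a positive integer and $q$ a positive even integer with $p/q\in[2.5,3)$. Then there exists a fractional clique $x$ of the Kneser graph $K_{p/q}$ of weight $p/q$ such that $x(v)=\binom{p-q}{q}^{-1}$ for every neighbor $v$ of the vertex $[q]=\{1,\dots,q\}$.
   Context: For integers $1\le q\le p$, the Kneser graph $K_{p/q}$ has as vertices all $q$-element subsets of $[p]=\{1,\dots,p\}$, two being adjacent iff they are disjoint. A fractional clique of a graph $G$ is a map $x:V(G)\to[0,1]$ such that $\sum_{v\in I}x(v)\le 1$ for every independent set $I$ of $G$; its weight is $\sum_{v\in V(G)}x(v)$. *)

theory Defs
  imports Complex_Main
begin

definition kneser_vertices :: "nat \<Rightarrow> nat \<Rightarrow> nat set set" where
  "kneser_vertices p q = {S. S \<subseteq> {1..p} \<and> card S = q}"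

definition kneser_adj :: "nat set \<Rightarrow> nat set \<Rightarrow> bool" where
  "kneser_adj S T \<longleftrightarrow> S \<inter> T = {}"

definition kneser_independent :: "nat \<Rightarrow> nat \<Rightarrow> nat set set \<Rightarrow> bool" where
  "kneser_independent p q I \<longleftrightarrow> I \<subseteq> kneser_vertices p q \<and>
     (\<forall>S\<in>I. \<forall>T\<in>I. S \<noteq> T \<longrightarrow> \<not> kneser_adj S T)"

definition kneser_fractional_clique :: "nat \<Rightarrow> nat \<Rightarrow> (nat set \<Rightarrow> real) \<Rightarrow> bool" where
  "kneser_fractional_clique p q x \<longleftrightarrow>
     (\<forall>v\<in>kneser_vertices p q. 0 \<le> x v \<and> x v \<le> 1) \<and>
     (\<forall>I. kneser_independent p q I \<longrightarrow> sum x I \<le> 1)"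

definition fc_weight :: "nat \<Rightarrow> nat \<Rightarrow> (nat set \<Rightarrow> real) \<Rightarrow> real" where
  "fc_weight p q x = sum x (kneser_vertices p q)"

end

theory Submission
  imports Defs
begin


definition idx :: "nat \<Rightarrow> nat \<Rightarrow> nat \<Rightarrow> nat set" where
  "idx r i l = (\<lambda>t. (i + t) mod r) ` {..<l}"

lemma mod_cancel_lt:
  fixes r i a b :: nat
  assumes "a < r" "b < r" "(i + a) mod r = (i + b) mod r"
  shows "a = b"
proof (cases "a \<le> b")
  case True
  then obtain k where "i + b = i + a + r * k" using assms(3) mod_eq_nat2E by (metis add_le_mono1 add.commute)
  hence "b = a + r * k" by simp
  with assms show ?thesis by (cases k) auto
next
  case False
  then obtain k where "i + a = i + b + r * k" using assms(3) mod_eq_nat1E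
    by (metis add_le_cancel_left nat_le_linear)
  hence "a = b + r * k" by simp
  with assms show ?thesis by (cases k) auto
qed

lemma idx_disj:
  assumes "l1 \<le> m" "m + l2 \<le> r"
  shows "idx r z l1 \<inter> idx r ((z + m) mod r) l2 = {}"
proof (rule ccontr)
  assume "idx r z l1 \<inter> idx r ((z + m) mod r) l2 \<noteq> {}"
  then obtain t t' where t: "t < l1" "t' < l2" and eq: "(z + t) mod r = ((z + m) mod r + t') mod r"
    unfolding idx_def by auto
  have "((z + m) mod r + t') mod r = (z + (m + t')) mod r" by (simp add: mod_add_left_eq add.assoc)
  with eq have "(z + t) mod r = (z + (m + t')) mod r" by simp
  moreover have "t < r" "m + t' < r" using t assms by auto
  ultimately have "t = m + t'" using mod_cancel_lt by blast
  thus False using t assms by auto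
qed

lemma mod_shift_inj:
  fixes X :: "nat set"
  assumes "X \<subseteq> {..<r}"
  shows "inj_on (\<lambda>x. (x + c) mod r) X"
proof (rule inj_onI)
  fix x y assume "x \<in> X" "y \<in> X" "(x + c) mod r = (y + c) mod r"
  thus "x = y" using assms mod_cancel_lt[of x r y c] by (auto simp: add.commute)
qed

lemma cross_card:
  assumes X: "X \<subseteq> {..<r}" and Y: "Y \<subseteq> {..<r}" and "2 * s \<le> r"
    and H: "\<forall>x\<in>X. \<forall>y\<in>Y. idx r x s \<inter> idx r y s \<noteq> {}"
  shows "card X + card Y \<le> r"
proof -
  let ?g = "\<lambda>x. (x + s) mod r"
  have r0: "r > 0 \<or> X = {}" using X by auto
  have "?g ` X \<inter> Y = {}"
  proof (rule ccontr)
    assume "?g ` X \<inter> Y \<noteq> {}"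
    then obtain x where x: "x \<in> X" "?g x \<in> Y" by auto
    have "idx r x s \<inter> idx r ((x + s) mod r) s = {}" by (rule idx_disj) (use assms in auto)
    with H x show False by auto
  qed
  moreover have "?g ` X \<subseteq> {..<r}"
  proof
    fix y assume "y \<in> ?g ` X" then obtain x where "x \<in> X" "y = ?g x" by auto
    thus "y \<in> {..<r}" using X by auto
  qed
  ultimately have "card (?g ` X \<union> Y) = card (?g ` X) + card Y"
    using Y by (intro card_Un_disjoint) (auto intro: finite_subset)
  moreover have "card (?g ` X) = card X" using mod_shift_inj[OF X] by (rule card_image)
  moreover have "card (?g ` X \<union> Y) \<le> r"
    using \<open>?g ` X \<subseteq> {..<r}\<close> Y card_mono[of "{..<r}" "?g ` X \<union> Y"] by auto
  ultimately show ?thesis by simp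
qed

lemma inter_card:
  assumes T: "T \<subseteq> {..<r}" and "2 * s \<le> r"
    and H: "\<forall>x\<in>T. \<forall>y\<in>T. idx r x s \<inter> idx r y s \<noteq> {}"
  shows "card T \<le> s"
proof (cases "T = {}")
  case True thus ?thesis by simp
next
  case False
  then obtain t0 where t0: "t0 \<in> T" by auto
  have t0r: "t0 < r" using t0 T by auto
  define m where "m = (\<lambda>t. (t + (r - t0)) mod r)"
  have tm: "t = (t0 + m t) mod r" if "t < r" for t
  proof -
    have "(t0 + m t) mod r = (t0 + (t + (r - t0))) mod r" unfolding m_def by (simp add: mod_add_right_eq)
    also have "t0 + (t + (r - t0)) = t + r" using t0r by simp
    finally show ?thesis using that by simp
  qed
  have mr: "m t < r" for t unfolding m_def using t0r by auto
  have mrange: "m t < s \<or> r - s < m t" if "t \<in> T" for t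
  proof (rule ccontr)
    assume "\<not> (m t < s \<or> r - s < m t)"
    hence "s \<le> m t" "m t + s \<le> r" by auto
    hence "idx r t0 s \<inter> idx r ((t0 + m t) mod r) s = {}" by (rule idx_disj)
    with tm[of t] that T H t0 show False by auto
  qed
  define h where "h = (\<lambda>t. if m t < s then m t else m t + s - r)"
  have hs: "h t < s" if "t \<in> T" for t using mrange[OF that] mr[of t] unfolding h_def by auto
  have "inj_on h T"
  proof (rule inj_onI)
    fix a b assume a: "a \<in> T" and b: "b \<in> T" and hab: "h a = h b"
    have ar: "a < r" and br: "b < r" using a b T by auto
    have key: False if c1: "m a < s" and c2: "\<not> m b < s" and eq: "m a = m b + s - r"
      and aT: "a \<in> T" and bT: "b \<in> T" and ar: "a < r" and br: "b < r" for a b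
    proof -
      have "r - s < m b" using mrange[OF bT] c2 by auto
      hence mb: "m b = m a + (r - s)" using eq assms(2) by auto
      have "(b + s) mod r = ((t0 + m b) mod r + s) mod r" using tm[OF br] by simp
      also have "\<dots> = (t0 + m b + s) mod r" by (simp add: mod_add_left_eq)
      also have "t0 + m b + s = (t0 + m a) + r" using mb assms(2) by simp
      also have "(t0 + m a + r) mod r = a" using tm[OF ar] by simp
      finally have "a = (b + s) mod r" by simp
      moreover have "idx r b s \<inter> idx r ((b + s) mod r) s = {}" by (rule idx_disj) (use assms(2) in auto)
      ultimately show False using H aT bT by auto
    qed
    show "a = b"
    proof (cases "m a < s"; cases "m b < s")
      assume "m a < s" "m b < s"
      hence "m a = m b" using hab unfolding h_def by simp
      thus ?thesis using tm[OF ar] tm[OF br] by metis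
    next
      assume "m a < s" "\<not> m b < s"
      thus ?thesis using key[of a b] hab a b ar br unfolding h_def by simp
    next
      assume "\<not> m a < s" "m b < s"
      thus ?thesis using key[of b a] hab a b ar br unfolding h_def by simp
    next
      assume "\<not> m a < s" "\<not> m b < s"
      moreover have "r - s < m a" "r - s < m b" using mrange a b calculation by auto
      ultimately have "m a = m b" using hab unfolding h_def by simp
      thus ?thesis using tm[OF ar] tm[OF br] by metis
    qed
  qed
  hence "card (h ` T) = card T" by (rule card_image)
  moreover have "h ` T \<subseteq> {..<s}" using hs by auto
  ultimately show ?thesis using card_mono[of "{..<s}" "h ` T"] by auto
qed

lemma closure_full:
  fixes S :: "nat set"
  assumes S: "S \<subseteq> {..<r}" and "w0 \<in> S" and cl: "\<forall>w\<in>S. (w + 1) mod r \<in> S"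
  shows "S = {..<r}"
proof -
  have all: "(w0 + n) mod r \<in> S" for n
  proof (induction n)
    case 0 thus ?case using assms by auto
  next
    case (Suc n)
    have "((w0 + n) mod r + 1) mod r \<in> S" using cl Suc by blast
    moreover have "((w0 + n) mod r + 1) mod r = (w0 + Suc n) mod r"
      using mod_add_left_eq[of "w0 + n" r 1] by simp
    ultimately show ?case by simp
  qed
  have w0r: "w0 < r" using assms by auto
  have "y \<in> S" if "y < r" for y
  proof -
    have "(w0 + (y + r - w0)) mod r = y" using w0r that by simp
    thus ?thesis using all[of "y + r - w0"] by simp
  qed
  thus ?thesis using S by auto
qed

definition sumW :: "nat \<Rightarrow> nat set \<Rightarrow> nat \<Rightarrow> nat \<Rightarrow> nat set" where
  "sumW r Z a k = (\<lambda>(z,m). (z + m) mod r) ` (Z \<times> {a..a+k})"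

lemma sumW_bound:
  assumes Z: "Z \<subseteq> {..<r}" "Z \<noteq> {}"
  shows "min r (card Z + k) \<le> card (sumW r Z a k)"
proof (induction k)
  case 0
  have "sumW r Z a 0 = (\<lambda>z. (z + a) mod r) ` Z" unfolding sumW_def by (auto simp: image_iff)
  moreover have "card ((\<lambda>z. (z + a) mod r) ` Z) = card Z"
    using mod_shift_inj[OF Z(1)] by (rule card_image)
  ultimately show ?case by simp
next
  case (Suc k)
  have r0: "r > 0" using Z by auto
  have finZ: "finite Z" using finite_subset[OF Z(1)] by simp
  have fin: "finite (sumW r Z a k')" for k' unfolding sumW_def using finZ by simp
  have sub: "sumW r Z a k' \<subseteq> {..<r}" for k' unfolding sumW_def using r0 by auto
  have mono: "sumW r Z a k \<subseteq> sumW r Z a (Suc k)" unfolding sumW_def by auto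
  have shift: "(w + 1) mod r \<in> sumW r Z a (Suc k)" if "w \<in> sumW r Z a k" for w
  proof -
    from that obtain z m where zm: "z \<in> Z" "m \<in> {a..a+k}" "w = (z + m) mod r"
      unfolding sumW_def by auto
    have "(w + 1) mod r = (z + (m + 1)) mod r" by (simp only: zm(3) mod_add_left_eq add.assoc)
    moreover have "m + 1 \<in> {a..a + Suc k}" using zm by auto
    moreover have "(z, m + 1) \<in> Z \<times> {a..a + Suc k}" using zm by auto
    ultimately show ?thesis unfolding sumW_def by (metis (no_types, lifting) case_prod_conv image_eqI)
  qed
  show ?case
  proof (cases "card (sumW r Z a k) < r")
    case False
    hence "r \<le> card (sumW r Z a (Suc k))"
      using card_mono[OF fin mono] by simp
    thus ?thesis by simp
  next
    case True
    hence "sumW r Z a k \<noteq> {..<r}" by (metis card_lessThan less_irrefl)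
    moreover have ne: "sumW r Z a k \<noteq> {}" unfolding sumW_def using Z by auto
    ultimately have "\<not> (\<forall>w\<in>sumW r Z a k. (w + 1) mod r \<in> sumW r Z a k)"
      using closure_full[OF sub] by blast
    then obtain w where w: "w \<in> sumW r Z a k" "(w + 1) mod r \<notin> sumW r Z a k" by auto
    have "insert ((w + 1) mod r) (sumW r Z a k) \<subseteq> sumW r Z a (Suc k)"
      using mono shift[OF w(1)] by auto
    hence "card (insert ((w + 1) mod r) (sumW r Z a k)) \<le> card (sumW r Z a (Suc k))"
      using fin by (intro card_mono) auto
    moreover have "card (insert ((w + 1) mod r) (sumW r Z a k)) = Suc (card (sumW r Z a k))"
      using fin w(2) by simp
    ultimately show ?thesis using Suc.IH by simp
  qed
qed

lemma arith_final:
  fixes s d u z t r :: nat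
  assumes "r + d = 4 * s" "1 \<le> d" "d \<le> s" "u + z + (s - d) \<le> r" "t \<le> s" "t \<le> z"
  shows "2 * s * u + (2 * s - d) * (z + t) \<le> 2 * s * r"
proof -
  define S D U Zi T R where "S = int s" "D = int d" "U = int u" "Zi = int z" "T = int t" "R = int r"
  have h: "R + D = 4 * S" "1 \<le> D" "D \<le> S" "U + Zi + (S - D) \<le> R" "T \<le> S" "T \<le> Zi" "0 \<le> U"
    using assms unfolding S_D_U_Zi_T_R_def by auto
  have goal: "2 * S * U + (2 * S - D) * (Zi + T) \<le> 2 * S * R"
  proof -
    have a: "2 * S * U \<le> 2 * S * (R - Zi - (S - D))" using h by (intro mult_left_mono) auto
    have b: "(2 * S - D) * (Zi + T) \<le> 2 * S * (Zi + S - D)"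
    proof (cases "Zi \<le> S")
      case True
      have "(2 * S - D) * (Zi + T) \<le> (2 * S - D) * (Zi + Zi)" using h by (intro mult_left_mono) auto
      moreover have "(S - D) * Zi \<le> (S - D) * S" using h True by (intro mult_left_mono) auto
      ultimately show ?thesis by (simp add: algebra_simps)
    next
      case False
      have "(2 * S - D) * (Zi + T) \<le> (2 * S - D) * (Zi + S)" using h by (intro mult_left_mono) auto
      moreover have "D * S \<le> D * Zi" using h False by (intro mult_left_mono) auto
      ultimately show ?thesis by (simp add: algebra_simps)
    qed
    from a b show ?thesis by (simp add: algebra_simps)
  qed
  have "int (2 * s * u + (2 * s - d) * (z + t)) = 2 * S * U + (2 * S - D) * (Zi + T)"
    using assms unfolding S_D_U_Zi_T_R_def by (simp add: of_nat_diff)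
  moreover have "int (2 * s * r) = 2 * S * R" unfolding S_D_U_Zi_T_R_def by simp
  ultimately show ?thesis using goal by linarith
qed

lemma core_ineq:
  fixes U X Y :: "nat set" and s d r :: nat
  assumes U: "U \<subseteq> {..<r}" and X: "X \<subseteq> {..<r}" and Y: "Y \<subseteq> {..<r}"
    and rd: "r + d = 4 * s" and d1: "1 \<le> d" and ds: "d \<le> s"
    and HQ: "\<delta> \<Longrightarrow> U = {}"
    and HXY: "\<forall>x\<in>X. \<forall>y\<in>Y. idx r x s \<inter> idx r y s \<noteq> {}"
    and HU: "\<forall>j\<in>U. \<forall>z\<in>X \<union> Y. idx r j (2 * s) \<inter> idx r z s \<noteq> {}"
  shows "2 * s * card U + (2 * s - d) * (card X + card Y) + (if \<delta> then d * r else 0) \<le> 2 * s * r"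
proof -
  have s2r: "2 * s \<le> r" using rd ds by linarith
  have cXY: "card X + card Y \<le> r" by (rule cross_card[OF X Y s2r HXY])
  have finU: "finite U" using finite_subset[OF U] by simp
  have finX: "finite X" using finite_subset[OF X] by simp
  have finY: "finite Y" using finite_subset[OF Y] by simp
  have cU: "card U \<le> r" using card_mono[OF _ U] by simp
  show ?thesis
  proof (cases \<delta>)
    case True
    hence U0: "U = {}" by (rule HQ)
    have a: "(2 * s - d) * (card X + card Y) \<le> (2 * s - d) * r" using cXY by (rule mult_left_mono) simp
    have b: "(2 * s - d) * r + d * r = 2 * s * r" using rd ds
      by (metis add_mult_distrib le_add_diff_inverse2 mult_2 trans_le_add1)
    have "2 * s * card U + (2 * s - d) * (card X + card Y) + (if \<delta> then d * r else 0)
        = (2 * s - d) * (card X + card Y) + d * r" using True U0 by simp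
    with a b show ?thesis by linarith
  next
    case False
    show ?thesis
    proof (cases "X \<union> Y = {}")
      case True
      thus ?thesis using False cU by simp
    next
      case ne: False
      define Z where "Z = X \<union> Y"
      have Z: "Z \<subseteq> {..<r}" "Z \<noteq> {}" using X Y ne unfolding Z_def by auto
      define W where "W = sumW r Z s (s - d)"
      have rpos: "r > 0" using Z by auto
      have disj: "U \<inter> W = {}"
      proof (rule ccontr)
        assume "U \<inter> W \<noteq> {}"
        then obtain j where j: "j \<in> U" "j \<in> W" by auto
        then obtain z m where zm: "z \<in> Z" "s \<le> m" "m \<le> s + (s - d)" "j = (z + m) mod r"
          unfolding W_def sumW_def by auto
        have "idx r z s \<inter> idx r ((z + m) mod r) (2 * s) = {}"
          by (rule idx_disj) (use zm rd ds in auto)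
        with HU j zm show False unfolding Z_def by auto
      qed
      have Wsub: "W \<subseteq> {..<r}" unfolding W_def sumW_def using rpos by auto
      have finW: "finite W" using finite_subset[OF Wsub] by simp
      have "card U + card W = card (U \<union> W)" using card_Un_disjoint[OF finU finW disj] by simp
      also have "\<dots> \<le> r" using card_mono[of "{..<r}" "U \<union> W"] U Wsub by auto
      finally have UW: "card U + card W \<le> r" .
      have Wb: "min r (card Z + (s - d)) \<le> card W" unfolding W_def by (rule sumW_bound[OF Z])
      have XY: "card X + card Y = card Z + card (X \<inter> Y)"
        unfolding Z_def using card_Un_Int[OF finX finY] by simp
      have T1: "card (X \<inter> Y) \<le> s"
        by (rule inter_card[of _ r]) (use X HXY s2r in auto)
      have T2: "card (X \<inter> Y) \<le> card Z" unfolding Z_def using finX finY by (intro card_mono) auto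
      show ?thesis
      proof (cases "r \<le> card Z + (s - d)")
        case True
        hence U0: "card U = 0" using UW Wb by simp
        have a: "(2 * s - d) * (card X + card Y) \<le> (2 * s - d) * r" using cXY by (rule mult_left_mono) simp
        have b: "(2 * s - d) * r \<le> 2 * s * r" by simp
        have "2 * s * card U + (2 * s - d) * (card X + card Y) + (if \<delta> then d * r else 0)
          = (2 * s - d) * (card X + card Y)" using False U0 by simp
        with a b show ?thesis by linarith
      next
        case F2: False
        hence "card U + card Z + (s - d) \<le> r" using UW Wb by simp
        from arith_final[OF rd d1 ds this T1 T2] XY False show ?thesis by simp
      qed
    qed
  qed
qed



lemma sum_if_const:
  fixes a :: real
  assumes "finite A"
  shows "(\<Sum>x\<in>A. if P x then a else 0) = a * card {x\<in>A. P x}"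
proof -
  have "(\<Sum>x\<in>A. if P x then a else 0) = (\<Sum>x\<in>{x\<in>A. P x}. a)"
    using sum.inter_filter[OF assms, of "\<lambda>_. a" P] by simp
  thus ?thesis by simp
qed

lemma idx_sub: "r > 0 \<Longrightarrow> idx r i l \<subseteq> {..<r}"
  unfolding idx_def by auto

lemma idx_card: assumes "l \<le> r" shows "card (idx r i l) = l"
proof -
  have "inj_on (\<lambda>t. (i + t) mod r) {..<l}"
  proof (rule inj_onI)
    fix a b assume "a \<in> {..<l}" "b \<in> {..<l}" "(i + a) mod r = (i + b) mod r"
    thus "a = b" using mod_cancel_lt[of a r b i] assms by auto
  qed
  thus ?thesis unfolding idx_def by (simp add: card_image)
qed

locale KN =
  fixes p q :: nat
  assumes qpos: "q > 0" and ev: "even q" and lo: "5 * q \<le> 2 * p" and hi: "p < 3 * q"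
begin

definition "s = q div 2"
definition "r = p - q"
definition "d = 3 * q - p"
definition "R = {q+1..p}"
definition "Qs = {1..q}"
definition "A1 = {1..s}"
definition "A2 = {s+1..q}"
definition "V = kneser_vertices p q"
definition "\<Omega> = {xs. set xs = R \<and> distinct xs}"
definition "c = real (q - d) / (real q * real r)"

definition "m1 xs i = nth xs ` idx r i q"
definition "m2 xs i = A1 \<union> nth xs ` idx r i s"
definition "m3 xs i = A2 \<union> nth xs ` idx r i s"

definition "wt xs v = (\<Sum>i<r. (if m1 xs i = v then 1 / real r else 0)
     + (if m2 xs i = v then c else 0) + (if m3 xs i = v then c else 0))
     + (if v = Qs then real d / real q else 0)"

lemma basic: "q = 2 * s" "s \<ge> 1" "r + d = 4 * s" "1 \<le> d" "d \<le> s" "p = q + r" "q \<le> r" "r > 0"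
  "2 * s \<le> r" "d \<le> q"
proof -
  obtain k where k: "q = 2 * k" using ev by (auto elim: evenE)
  have sk: "s = k" unfolding s_def using k by simp
  have r: "r = p - q" and d: "d = 3 * q - p" unfolding r_def d_def by auto
  show "q = 2 * s" using k sk by simp
  show "s \<ge> 1" using k sk qpos by simp
  show "r + d = 4 * s" using k sk r d lo hi by linarith
  show "1 \<le> d" using d hi by linarith
  show "d \<le> s" using k sk d lo by linarith
  show "p = q + r" using r hi lo by linarith
  show "q \<le> r" using r lo by linarith
  show "r > 0" using r lo qpos by linarith
  show "2 * s \<le> r" using k sk r lo by linarith
  show "d \<le> q" using d lo by linarith
qed

lemma cardR: "card R = r" unfolding R_def r_def by simp

lemma Omega_props:
  assumes "xs \<in> \<Omega>"
  shows "length xs = r" "\<And>k. k < r \<Longrightarrow> xs ! k \<in> R" "inj_on (nth xs) {..<r}"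
proof -
  have h: "set xs = R" "distinct xs" using assms unfolding \<Omega>_def by auto
  show l: "length xs = r" using distinct_card[OF h(2)] h(1) cardR by simp
  show "\<And>k. k < r \<Longrightarrow> xs ! k \<in> R"
  proof -
    fix k assume "k < r"
    hence "xs ! k \<in> set xs" using l by simp
    thus "xs ! k \<in> R" using h(1) by simp
  qed
  show "inj_on (nth xs) {..<r}" using inj_on_nth[OF h(2), of "{..<r}"] l by simp
qed

lemma Omega_fin: "finite \<Omega>"
proof -
  have "\<Omega> \<subseteq> {xs. set xs \<subseteq> R \<and> length xs = r}" using Omega_props(1) unfolding \<Omega>_def by auto
  moreover have "finite {xs. set xs \<subseteq> R \<and> length xs = r}"
    by (rule finite_lists_length_eq) (simp add: R_def)
  ultimately show ?thesis by (rule finite_subset)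
qed

lemma Omega_ne: "\<Omega> \<noteq> {}"
  using finite_distinct_list[of R] unfolding \<Omega>_def R_def by auto

lemma arc_sub: "xs \<in> \<Omega> \<Longrightarrow> nth xs ` idx r i l \<subseteq> R"
  using Omega_props(2) idx_sub[OF basic(8)] by blast

lemma arc_card: "xs \<in> \<Omega> \<Longrightarrow> l \<le> r \<Longrightarrow> card (nth xs ` idx r i l) = l"
  using Omega_props(3) idx_sub[OF basic(8)] idx_card
  by (metis card_image inj_on_subset)

lemma arc_meet: "xs \<in> \<Omega> \<Longrightarrow> nth xs ` idx r i l \<inter> nth xs ` idx r j l' \<noteq> {}
   \<Longrightarrow> idx r i l \<inter> idx r j l' \<noteq> {}"
proof -
  assume xs: "xs \<in> \<Omega>" and ne: "nth xs ` idx r i l \<inter> nth xs ` idx r j l' \<noteq> {}"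
  then obtain a b where ab: "a \<in> idx r i l" "b \<in> idx r j l'" "xs ! a = xs ! b" by auto
  have "a < r" "b < r" using ab idx_sub[OF basic(8)] by auto
  hence "a = b" using Omega_props(3)[OF xs] ab(3) by (auto dest: inj_onD)
  thus ?thesis using ab by auto
qed

lemma R_disj: "R \<inter> Qs = {}" "A1 \<inter> R = {}" "A2 \<inter> R = {}" "A1 \<inter> A2 = {}"
  "A1 \<subseteq> Qs" "A2 \<subseteq> Qs" "1 \<in> A1" "s + 1 \<in> A2" "Qs \<subseteq> {1..p}" "R \<subseteq> {1..p}"
proof -
  have b: "q = 2 * s" "s \<ge> 1" "q \<le> p" using basic by auto
  show "R \<inter> Qs = {}" unfolding R_def Qs_def by auto
  show "A1 \<inter> R = {}" unfolding R_def A1_def using b by auto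
  show "A2 \<inter> R = {}" unfolding R_def A2_def by auto
  show "A1 \<inter> A2 = {}" unfolding A1_def A2_def by auto
  show "A1 \<subseteq> Qs" unfolding A1_def Qs_def using b by auto
  show "A2 \<subseteq> Qs" unfolding A2_def Qs_def by auto
  show "1 \<in> A1" unfolding A1_def using b by auto
  show "s + 1 \<in> A2" unfolding A2_def using b by auto
  show "Qs \<subseteq> {1..p}" unfolding Qs_def using b by auto
  show "R \<subseteq> {1..p}" unfolding R_def by auto
qed

lemma cardA: "card A1 = s" "card A2 = s" "card Qs = q"
  using basic unfolding A1_def A2_def Qs_def by auto

lemma members_V:
  assumes "xs \<in> \<Omega>"
  shows "m1 xs i \<in> V" "m2 xs i \<in> V" "m3 xs i \<in> V" "Qs \<in> V"
proof -
  have sr: "s \<le> r" and qr: "q \<le> r" and qs: "q = s + s" using basic by linarith+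
  have a: "nth xs ` idx r i s \<subseteq> R" "nth xs ` idx r i q \<subseteq> R" using arc_sub[OF assms] by auto
  have ca: "card (nth xs ` idx r i s) = s" "card (nth xs ` idx r i q) = q"
    using arc_card[OF assms] sr qr by auto
  have finA: "finite (nth xs ` idx r i s)" by (simp add: idx_def)
  have Rp: "R \<subseteq> {1..p}" by (rule R_disj)
  show "m1 xs i \<in> V" unfolding m1_def V_def kneser_vertices_def using a(2) ca(2) Rp by auto
  have d1: "A1 \<inter> nth xs ` idx r i s = {}" "A2 \<inter> nth xs ` idx r i s = {}" using a(1) R_disj(2,3) by auto
  have "card (m2 xs i) = s + s" unfolding m2_def
    using card_Un_disjoint[OF _ finA d1(1)] cardA(1) ca(1) by (simp add: A1_def)
  moreover have "m2 xs i \<subseteq> {1..p}" unfolding m2_def using a(1) Rp R_disj(5,9) by auto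
  ultimately show "m2 xs i \<in> V" unfolding V_def kneser_vertices_def using qs by auto
  have "card (m3 xs i) = s + s" unfolding m3_def
    using card_Un_disjoint[OF _ finA d1(2)] cardA(2) ca(1) by (simp add: A2_def)
  moreover have "m3 xs i \<subseteq> {1..p}" unfolding m3_def using a(1) Rp R_disj(6,9) by auto
  ultimately show "m3 xs i \<in> V" unfolding V_def kneser_vertices_def using qs by auto
  show "Qs \<in> V" unfolding V_def kneser_vertices_def using R_disj(9) cardA(3) by auto
qed

end


context KN begin

lemma sum_wt:
  assumes "finite I"
  shows "(\<Sum>v\<in>I. wt xs v) = (1 / real r) * card {i\<in>{..<r}. m1 xs i \<in> I}
     + c * card {i\<in>{..<r}. m2 xs i \<in> I} + c * card {i\<in>{..<r}. m3 xs i \<in> I}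
     + (if Qs \<in> I then real d / real q else 0)"
proof -
  have "(\<Sum>v\<in>I. wt xs v) = (\<Sum>v\<in>I. \<Sum>i<r. (if m1 xs i = v then 1 / real r else 0)
     + (if m2 xs i = v then c else 0) + (if m3 xs i = v then c else 0))
     + (\<Sum>v\<in>I. if v = Qs then real d / real q else 0)"
    unfolding wt_def by (simp add: sum.distrib)
  also have "(\<Sum>v\<in>I. \<Sum>i<r. (if m1 xs i = v then 1 / real r else 0)
     + (if m2 xs i = v then c else 0) + (if m3 xs i = v then c else 0))
     = (\<Sum>i<r. \<Sum>v\<in>I. (if m1 xs i = v then 1 / real r else 0)
     + (if m2 xs i = v then c else 0) + (if m3 xs i = v then c else 0))"
    by (rule sum.swap)
  also have "\<dots> = (\<Sum>i<r. (if m1 xs i \<in> I then 1 / real r else 0)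
     + (if m2 xs i \<in> I then c else 0) + (if m3 xs i \<in> I then c else 0))"
    using assms by (simp add: sum.distrib)
  also have "\<dots> = (1 / real r) * card {i\<in>{..<r}. m1 xs i \<in> I}
     + c * card {i\<in>{..<r}. m2 xs i \<in> I} + c * card {i\<in>{..<r}. m3 xs i \<in> I}"
    by (simp add: sum.distrib sum_if_const)
  also have "(\<Sum>v\<in>I. if v = Qs then real d / real q else 0) = (if Qs \<in> I then real d / real q else 0)"
    using assms by simp
  finally show ?thesis .
qed

lemma V_fin: "finite V"
proof -
  have "V \<subseteq> Pow {1..p}" unfolding V_def kneser_vertices_def by auto
  thus ?thesis by (rule finite_subset) simp
qed

lemma m1_sub: "xs \<in> \<Omega> \<Longrightarrow> m1 xs i \<subseteq> R" unfolding m1_def using arc_sub by auto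

lemma clique_xs:
  assumes xs: "xs \<in> \<Omega>" and ind: "kneser_independent p q I"
  shows "(\<Sum>v\<in>I. wt xs v) \<le> 1"
proof -
  have IV: "I \<subseteq> V" and meet: "\<And>S T. S \<in> I \<Longrightarrow> T \<in> I \<Longrightarrow> S \<noteq> T \<Longrightarrow> S \<inter> T \<noteq> {}"
    using ind unfolding kneser_independent_def kneser_adj_def V_def by auto
  have finI: "finite I" using finite_subset[OF IV V_fin] .
  define U where "U = {i\<in>{..<r}. m1 xs i \<in> I}"
  define X where "X = {i\<in>{..<r}. m2 xs i \<in> I}"
  define Y where "Y = {i\<in>{..<r}. m3 xs i \<in> I}"
  define \<delta> where "\<delta> = (Qs \<in> I)"
  have b: "q = 2 * s" "r + d = 4 * s" "1 \<le> d" "d \<le> s" "r > 0" "d \<le> q" using basic by auto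
  have arcR: "nth xs ` idx r i l \<subseteq> R" for i l using arc_sub[OF xs] .
  have one: "1 \<in> Qs" "1 \<notin> R" "1 \<notin> A2" "s + 1 \<notin> R" "s + 1 \<notin> A1" "1 \<in> A1" "s + 1 \<in> A2"
    using b R_disj unfolding R_def Qs_def A1_def A2_def by auto
  have HQ: "\<delta> \<Longrightarrow> U = {}"
  proof -
    assume "\<delta>"
    show "U = {}"
    proof (rule ccontr)
      assume "U \<noteq> {}"
      then obtain j where j: "m1 xs j \<in> I" unfolding U_def by auto
      have "m1 xs j \<inter> Qs = {}" using m1_sub[OF xs] R_disj(1) by auto
      moreover have "m1 xs j \<noteq> Qs" using m1_sub[OF xs, of j] one by auto
      ultimately show False using meet[OF j \<open>\<delta>\<close>[unfolded \<delta>_def]] by auto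
    qed
  qed
  have HXY: "\<forall>x\<in>X. \<forall>y\<in>Y. idx r x s \<inter> idx r y s \<noteq> {}"
  proof (intro ballI)
    fix x y assume "x \<in> X" "y \<in> Y"
    hence I2: "m2 xs x \<in> I" "m3 xs y \<in> I" unfolding X_def Y_def by auto
    have "m2 xs x \<noteq> m3 xs y"
    proof
      assume e: "m2 xs x = m3 xs y"
      have "1 \<in> m2 xs x" unfolding m2_def using one by auto
      hence "1 \<in> m3 xs y" using e by simp
      thus False unfolding m3_def using one arcR[of y s] by auto
    qed
    hence ne: "m2 xs x \<inter> m3 xs y \<noteq> {}" using meet[OF I2] by auto
    have "m2 xs x \<inter> m3 xs y \<subseteq> nth xs ` idx r x s \<inter> nth xs ` idx r y s"
      unfolding m2_def m3_def using R_disj(2,3,4) arcR[of x s] arcR[of y s] by auto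
    hence "nth xs ` idx r x s \<inter> nth xs ` idx r y s \<noteq> {}" using ne by auto
    thus "idx r x s \<inter> idx r y s \<noteq> {}" by (rule arc_meet[OF xs])
  qed
  have HU: "\<forall>j\<in>U. \<forall>z\<in>X \<union> Y. idx r j (2 * s) \<inter> idx r z s \<noteq> {}"
  proof (intro ballI)
    fix j z assume "j \<in> U" "z \<in> X \<union> Y"
    hence j: "m1 xs j \<in> I" and z: "m2 xs z \<in> I \<or> m3 xs z \<in> I" unfolding U_def X_def Y_def by auto
    have "m1 xs j \<inter> nth xs ` idx r z s \<noteq> {}"
    proof (cases "m2 xs z \<in> I")
      case True
      have "m1 xs j \<noteq> m2 xs z" using one m1_sub[OF xs, of j] unfolding m2_def by auto
      hence "m1 xs j \<inter> m2 xs z \<noteq> {}" using meet[OF j True] by auto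
      thus ?thesis unfolding m2_def using m1_sub[OF xs, of j] R_disj(2) by auto
    next
      case False
      hence z3: "m3 xs z \<in> I" using z by auto
      have "m1 xs j \<noteq> m3 xs z" using one m1_sub[OF xs, of j] unfolding m3_def by auto
      hence "m1 xs j \<inter> m3 xs z \<noteq> {}" using meet[OF j z3] by auto
      thus ?thesis unfolding m3_def using m1_sub[OF xs, of j] R_disj(3) by auto
    qed
    hence "nth xs ` idx r j q \<inter> nth xs ` idx r z s \<noteq> {}" unfolding m1_def .
    hence "idx r j q \<inter> idx r z s \<noteq> {}" by (rule arc_meet[OF xs])
    thus "idx r j (2 * s) \<inter> idx r z s \<noteq> {}" using b(1) by simp
  qed
  have core: "2 * s * card U + (2 * s - d) * (card X + card Y) + (if \<delta> then d * r else 0) \<le> 2 * s * r"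
    by (rule core_ineq[OF _ _ _ b(2) b(3) b(4) HQ HXY HU]) (auto simp: U_def X_def Y_def)
  hence core': "real q * card U + (real q - real d) * (card X + card Y) + (if \<delta> then real d * real r else 0)
      \<le> real q * real r"
  proof -
    have h1: "real (2 * s * card U + (2 * s - d) * (card X + card Y) + (if \<delta> then d * r else 0)) \<le> real (2 * s * r)"
      using core by (simp only: of_nat_le_iff)
    have h2: "real (2 * s * card U + (2 * s - d) * (card X + card Y) + (if \<delta> then d * r else 0))
       = real q * card U + (real q - real d) * (card X + card Y) + (if \<delta> then real d * real r else 0)"
      using b by (simp add: of_nat_diff)
    have h3: "real (2 * s * r) = real q * real r" using b by simp
    show ?thesis using h1 h2 h3 by linarith
  qed
  have eq: "(\<Sum>v\<in>I. wt xs v) = (real q * card U + (real q - real d) * (card X + card Y)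
       + (if \<delta> then real d * real r else 0)) / (real q * real r)"
    unfolding sum_wt[OF finI] U_def[symmetric] X_def[symmetric] Y_def[symmetric] \<delta>_def[symmetric] c_def
    using b by (cases \<delta>) (auto simp: field_simps of_nat_diff)
  have pos: "real q * real r > 0" using b by simp
  show ?thesis unfolding eq using core' pos by simp
qed

lemma weight_xs:
  assumes xs: "xs \<in> \<Omega>"
  shows "(\<Sum>v\<in>V. wt xs v) = real p / real q"
proof -
  have b: "q = 2 * s" "r + d = 4 * s" "1 \<le> d" "d \<le> s" "r > 0" "d \<le> q" "p = q + r" using basic by auto
  have all: "{i\<in>{..<r}. m1 xs i \<in> V} = {..<r}" "{i\<in>{..<r}. m2 xs i \<in> V} = {..<r}"
    "{i\<in>{..<r}. m3 xs i \<in> V} = {..<r}" using members_V[OF xs] by auto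
  have "(\<Sum>v\<in>V. wt xs v) = 1 + 2 * c * r + real d / real q"
    unfolding sum_wt[OF V_fin] all using members_V(4)[OF xs] b by (simp add: field_simps)
  also have "\<dots> = (3 * real q - real d) / real q"
    unfolding c_def using b by (simp add: field_simps of_nat_diff)
  also have "3 * real q - real d = real p"
  proof -
    have "p + d = 3 * q" using b by linarith
    hence "real p + real d = 3 * real q" by (metis of_nat_add of_nat_mult of_nat_numeral)
    thus ?thesis by linarith
  qed
  finally show ?thesis .
qed

definition "N = {v\<in>V. v \<inter> Qs = {}}"

lemma N_sum_xs:
  assumes xs: "xs \<in> \<Omega>"
  shows "(\<Sum>v\<in>N. wt xs v) = 1"
proof -
  have b: "r > 0" "1 \<le> s" using basic by auto
  have finN: "finite N" unfolding N_def using V_fin by simp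
  have one: "1 \<in> Qs" "1 \<in> A1" "s + 1 \<in> Qs" "s + 1 \<in> A2" using b R_disj unfolding Qs_def A1_def A2_def
    by auto
  have "m1 xs i \<in> N" for i
  proof -
    have "m1 xs i \<inter> Qs = {}" using m1_sub[OF xs, of i] R_disj(1) by blast
    thus ?thesis using members_V(1)[OF xs, of i] unfolding N_def by simp
  qed
  hence a1: "{i\<in>{..<r}. m1 xs i \<in> N} = {..<r}" by auto
  have a2: "{i\<in>{..<r}. m2 xs i \<in> N} = {}" using one unfolding N_def m2_def by auto
  have a3: "{i\<in>{..<r}. m3 xs i \<in> N} = {}" using one unfolding N_def m3_def by auto
  have a4: "Qs \<notin> N" using one unfolding N_def by auto
  show ?thesis unfolding sum_wt[OF finN] a1 a2 a3 using a4 b by simp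
qed

definition "pe \<pi> = (\<lambda>y. if y \<in> R then \<pi> y else y)"

lemma pe_props:
  assumes "bij_betw \<pi> R R"
  shows "inj_on (pe \<pi>) {1..p}" "pe \<pi> ` R = R" "\<And>B. B \<inter> R = {} \<Longrightarrow> pe \<pi> ` B = B"
    "inj_on (pe \<pi>) R"
proof -
  have inj: "inj_on \<pi> R" and im: "\<pi> ` R = R" using assms unfolding bij_betw_def by auto
  show "inj_on (pe \<pi>) {1..p}"
  proof (rule inj_onI)
    fix y z assume "y \<in> {1..p}" "z \<in> {1..p}" "pe \<pi> y = pe \<pi> z"
    thus "y = z" unfolding pe_def using inj im by (auto split: if_splits dest: inj_onD)
  qed
  show "pe \<pi> ` R = R" unfolding pe_def using im by auto
  show "\<And>B. B \<inter> R = {} \<Longrightarrow> pe \<pi> ` B = B"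
  proof -
    fix B assume "B \<inter> R = {}"
    hence "\<forall>y\<in>B. pe \<pi> y = y" unfolding pe_def by auto
    thus "pe \<pi> ` B = B" by (simp add: image_cong)
  qed
  show "inj_on (pe \<pi>) R" unfolding pe_def using inj by (auto simp: inj_on_def)
qed

lemma map_pe_Omega:
  assumes "bij_betw \<pi> R R" "xs \<in> \<Omega>"
  shows "map (pe \<pi>) xs \<in> \<Omega>"
proof -
  have "set xs = R" "distinct xs" using assms(2) unfolding \<Omega>_def by auto
  thus ?thesis unfolding \<Omega>_def using pe_props[OF assms(1)] by (auto simp: distinct_map)
qed

lemma wt_perm:
  assumes \<pi>: "bij_betw \<pi> R R" and xs: "xs \<in> \<Omega>" and v: "v \<subseteq> {1..p}"
  shows "wt (map (pe \<pi>) xs) (pe \<pi> ` v) = wt xs v"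
proof -
  let ?f = "pe \<pi>"
  have len: "length xs = r" using Omega_props(1)[OF xs] .
  have arc: "nth (map ?f xs) ` idx r i l = ?f ` (nth xs ` idx r i l)" for i l
  proof -
    have "\<forall>k\<in>idx r i l. map ?f xs ! k = ?f (xs ! k)"
    proof
      fix k assume "k \<in> idx r i l"
      hence "k < r" using idx_sub[OF basic(8)] by auto
      thus "map ?f xs ! k = ?f (xs ! k)" using len by simp
    qed
    thus ?thesis by (auto simp: image_iff)
  qed
  have injp: "inj_on ?f {1..p}" using pe_props(1)[OF \<pi>] .
  have sub: "m1 xs i \<subseteq> {1..p}" "m2 xs i \<subseteq> {1..p}" "m3 xs i \<subseteq> {1..p}" for i
    using members_V[OF xs] unfolding V_def kneser_vertices_def by auto
  have A: "?f ` A1 = A1" "?f ` A2 = A2" "?f ` Qs = Qs" using pe_props(3)[OF \<pi>] R_disj by (auto simp: Int_commute)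
  have e1: "m1 (map ?f xs) i = ?f ` m1 xs i" for i unfolding m1_def arc ..
  have e2: "m2 (map ?f xs) i = ?f ` m2 xs i" for i unfolding m2_def arc image_Un A ..
  have e3: "m3 (map ?f xs) i = ?f ` m3 xs i" for i unfolding m3_def arc image_Un A ..
  have iff: "(?f ` B = ?f ` v) = (B = v)" if "B \<subseteq> {1..p}" for B
    using inj_on_image_eq_iff[OF injp that v] .
  have iffQ: "(?f ` v = Qs) = (v = Qs)"
    using inj_on_image_eq_iff[OF injp v R_disj(9)] A(3) by simp
  show ?thesis unfolding wt_def e1 e2 e3 iff[OF sub(1)] iff[OF sub(2)] iff[OF sub(3)] iffQ ..
qed

lemma Omega_reindex:
  assumes \<pi>: "bij_betw \<pi> R R"
  shows "inj_on (map (pe \<pi>)) \<Omega>" "map (pe \<pi>) ` \<Omega> = \<Omega>"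
proof -
  show inj: "inj_on (map (pe \<pi>)) \<Omega>"
  proof (rule inj_onI)
    fix xs ys assume "xs \<in> \<Omega>" "ys \<in> \<Omega>" "map (pe \<pi>) xs = map (pe \<pi>) ys"
    moreover have "set xs \<union> set ys = R" using \<open>xs \<in> \<Omega>\<close> \<open>ys \<in> \<Omega>\<close> unfolding \<Omega>_def by auto
    ultimately show "xs = ys" using map_inj_on pe_props(4)[OF \<pi>] by metis
  qed
  have sub: "map (pe \<pi>) ` \<Omega> \<subseteq> \<Omega>" using map_pe_Omega[OF \<pi>] by auto
  moreover have "card (map (pe \<pi>) ` \<Omega>) = card \<Omega>" using card_image[OF inj] .
  ultimately show "map (pe \<pi>) ` \<Omega> = \<Omega>" using card_subset_eq[OF Omega_fin] by blast
qed

definition "xf v = (\<Sum>xs\<in>\<Omega>. wt xs v) / real (card \<Omega>)"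

lemma xf_perm:
  assumes \<pi>: "bij_betw \<pi> R R" and v: "v \<subseteq> {1..p}"
  shows "xf (pe \<pi> ` v) = xf v"
proof -
  have "(\<Sum>ys\<in>\<Omega>. wt ys (pe \<pi> ` v)) = (\<Sum>ys\<in>map (pe \<pi>) ` \<Omega>. wt ys (pe \<pi> ` v))"
    using Omega_reindex(2)[OF \<pi>] by simp
  also have "\<dots> = (\<Sum>xs\<in>\<Omega>. wt (map (pe \<pi>) xs) (pe \<pi> ` v))"
    by (rule sum.reindex[OF Omega_reindex(1)[OF \<pi>], unfolded comp_def])
  also have "\<dots> = (\<Sum>xs\<in>\<Omega>. wt xs v)" using wt_perm[OF \<pi> _ v] by simp
  finally show ?thesis unfolding xf_def by simp
qed

lemma exists_perm:
  assumes v: "v \<subseteq> R" and w: "w \<subseteq> R" and c: "card v = card w"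
  shows "\<exists>\<pi>. bij_betw \<pi> R R \<and> pe \<pi> ` v = w"
proof -
  have finR: "finite R" unfolding R_def by simp
  have fv: "finite v" "finite w" using v w finR finite_subset by auto
  obtain f1 where f1: "bij_betw f1 v w" using finite_same_card_bij[OF fv c] by auto
  have c2: "card (R - v) = card (R - w)" using c v w finR by (simp add: card_Diff_subset fv)
  obtain f2 where f2: "bij_betw f2 (R - v) (R - w)"
    using finite_same_card_bij[OF _ _ c2] finR by auto
  define \<pi> where "\<pi> = (\<lambda>y. if y \<in> v then f1 y else f2 y)"
  have b1: "bij_betw \<pi> v w" using f1 unfolding \<pi>_def by (rule bij_betw_cong[THEN iffD1, rotated]) auto
  have b2: "bij_betw \<pi> (R - v) (R - w)" using f2 unfolding \<pi>_def
    by (rule bij_betw_cong[THEN iffD1, rotated]) auto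
  have "bij_betw \<pi> (v \<union> (R - v)) (w \<union> (R - w))" by (rule bij_betw_combine[OF b1 b2]) auto
  moreover have "v \<union> (R - v) = R" "w \<union> (R - w) = R" using v w by auto
  ultimately have bR: "bij_betw \<pi> R R" by simp
  have "pe \<pi> ` v = \<pi> ` v" unfolding pe_def using v by (auto simp: image_iff)
  also have "\<dots> = w" using b1 unfolding bij_betw_def by simp
  finally show ?thesis using bR by blast
qed

lemma sum_xf: "finite I \<Longrightarrow> (\<Sum>v\<in>I. xf v) = (\<Sum>xs\<in>\<Omega>. \<Sum>v\<in>I. wt xs v) / real (card \<Omega>)"
  unfolding xf_def by (simp add: sum_divide_distrib[symmetric] sum.swap[of _ I])

lemma card_Omega_pos: "real (card \<Omega>) > 0"
  using Omega_fin Omega_ne by (simp add: card_gt_0_iff)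

lemma xf_clique: "kneser_independent p q I \<Longrightarrow> (\<Sum>v\<in>I. xf v) \<le> 1"
proof -
  assume ind: "kneser_independent p q I"
  have "I \<subseteq> V" using ind unfolding kneser_independent_def V_def by auto
  hence finI: "finite I" using V_fin finite_subset by auto
  have "(\<Sum>xs\<in>\<Omega>. \<Sum>v\<in>I. wt xs v) \<le> (\<Sum>xs\<in>\<Omega>. 1)"
    by (rule sum_mono) (rule clique_xs[OF _ ind])
  thus ?thesis unfolding sum_xf[OF finI] using card_Omega_pos by (simp add: divide_le_eq)
qed

lemma wt_nonneg: "wt xs v \<ge> 0"
proof -
  have "c \<ge> 0" unfolding c_def by simp
  thus ?thesis unfolding wt_def by (intro add_nonneg_nonneg sum_nonneg) auto
qed

lemma xf_weight: "(\<Sum>v\<in>V. xf v) = real p / real q"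
  unfolding sum_xf[OF V_fin] using weight_xs card_Omega_pos by simp

lemma xf_N: "(\<Sum>v\<in>N. xf v) = 1"
proof -
  have finN: "finite N" unfolding N_def using V_fin by simp
  show ?thesis unfolding sum_xf[OF finN] using N_sum_xs card_Omega_pos by simp
qed

lemma N_alt: "N = {B. B \<subseteq> R \<and> card B = q}"
proof -
  have "(B \<subseteq> {1..p} \<and> B \<inter> {1..q} = {}) = (B \<subseteq> {q+1..p})" for B :: "nat set"
  proof
    assume h: "B \<subseteq> {1..p} \<and> B \<inter> {1..q} = {}"
    show "B \<subseteq> {q+1..p}"
    proof
      fix x assume x: "x \<in> B"
      hence "x \<in> {1..p}" "x \<notin> {1..q}" using h by auto
      thus "x \<in> {q+1..p}" by auto
    qed
  next
    assume "B \<subseteq> {q+1..p}"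
    thus "B \<subseteq> {1..p} \<and> B \<inter> {1..q} = {}" by auto
  qed
  thus ?thesis unfolding N_def V_def kneser_vertices_def R_def Qs_def by blast
qed

lemma card_N: "card N = r choose q"
  unfolding N_alt using n_subsets[of R q] cardR by (simp add: R_def)

lemma xf_on_N:
  assumes v: "v \<in> N"
  shows "xf v = 1 / real (r choose q)"
proof -
  have vR: "v \<subseteq> R" "card v = q" using v N_alt by auto
  have const: "xf w = xf v" if "w \<in> N" for w
  proof -
    have wR: "w \<subseteq> R" "card w = q" using that N_alt by auto
    obtain \<pi> where \<pi>: "bij_betw \<pi> R R" "pe \<pi> ` v = w" using exists_perm[OF vR(1) wR(1)] vR wR by auto
    have "v \<subseteq> {1..p}" using vR R_disj(10) by auto
    thus ?thesis using xf_perm[OF \<pi>(1)] \<pi>(2) by metis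
  qed
  have "(\<Sum>w\<in>N. xf w) = (\<Sum>w\<in>N. xf v)" using const by simp
  hence "real (card N) * xf v = 1" using xf_N by simp
  moreover have "r choose q > 0" using basic(7) by simp
  ultimately show ?thesis unfolding card_N by (simp add: field_simps)
qed

lemma main:
  "kneser_fractional_clique p q xf \<and> fc_weight p q xf = real p / real q \<and>
   (\<forall>v\<in>kneser_vertices p q. kneser_adj v {1..q} \<longrightarrow> xf v = 1 / real ((p - q) choose q))"
proof (intro conjI ballI impI)
  show "kneser_fractional_clique p q xf"
    unfolding kneser_fractional_clique_def
  proof (intro conjI ballI allI impI)
    fix v assume v: "v \<in> kneser_vertices p q"
    show "0 \<le> xf v" unfolding xf_def using wt_nonneg card_Omega_pos by (simp add: sum_nonneg)
    have "kneser_independent p q {v}" using v unfolding kneser_independent_def by auto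
    from xf_clique[OF this] show "xf v \<le> 1" by simp
  next
    fix I assume "kneser_independent p q I"
    thus "sum xf I \<le> 1" by (rule xf_clique)
  qed
  show "fc_weight p q xf = real p / real q" unfolding fc_weight_def using xf_weight by (simp add: V_def)
  fix v assume "v \<in> kneser_vertices p q" "kneser_adj v {1..q}"
  hence "v \<in> N" unfolding N_def V_def kneser_adj_def Qs_def by auto
  thus "xf v = 1 / real ((p - q) choose q)" using xf_on_N by (simp add: r_def)
qed

end


theorem mainTheorem13:
  fixes p q :: nat
  assumes "p > 0" and "q > 0" and "even q"
    and "5 / 2 \<le> real p / real q" and "real p / real q < 3"
  shows "\<exists>x. kneser_fractional_clique p q x \<and>
           fc_weight p q x = real p / real q \<and>
           (\<forall>v\<in>kneser_vertices p q. kneser_adj v {1..q} \<longrightarrow>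
               x v = 1 / real ((p - q) choose q))"
proof -
  have qp: "real q > 0" using assms(2) by simp
  have "5 * real q \<le> 2 * real p" using assms(4) qp by (simp add: field_simps)
  hence lo: "5 * q \<le> 2 * p" by linarith
  have "real p < 3 * real q" using assms(5) qp by (simp add: field_simps)
  hence hi: "p < 3 * q" by linarith
  interpret KN p q using assms(2,3) lo hi by unfold_locales auto
  show ?thesis using main by blast
qed

end
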